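(* Let $\delta>0$ and $x_0>0$. Call a pair $(x(\cdot),y(\cdot))$ admissible if $y:[0,\infty)\to(0,\infty)$ is Lebesgue measurable and locally bounded and $x:[0,\infty)\to\mathbb{R}$ is the (locally absolutely continuous, Carathéodory) solution on $[0,\infty)$ of \[ \dot x(t)=x(t)\big(1-x(t)\big)-y(t)x(t),\qquad x(0)=x_0 . \] Then there is a decreasing function $\omega:[0,\infty)\to(0,\infty)$ with $\omega(t)\to 0$ as $t\to\infty$ such that for every admissible pair $(x(\cdot),y(\cdot))$ \[ \int_T^{T'}e^{-\delta t}\big[\ln x(t)+\ln y(t)\big]\,dt<\omega(T)\qquad\text{for all }0\le T<T'. \] *)

theory Defs
  imports "HOL-Analysis.Analysis"
begin

text \<open>It agrees with the ordinary Lebesgue integral for integrable functions and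
  equals minus infinity if only the negative part has infinite integral.\<close>
definition ext_set_integral :: "real set \<Rightarrow> (real \<Rightarrow> real) \<Rightarrow> ereal" where
  "ext_set_integral A f =
     enn2ereal (\<integral>\<^sup>+ t. ennreal (indicator A t * f t) \<partial>lborel)
   - enn2ereal (\<integral>\<^sup>+ t. ennreal (- (indicator A t * f t)) \<partial>lborel)"

definition admissible :: "real \<Rightarrow> (real \<Rightarrow> real) \<Rightarrow> (real \<Rightarrow> real) \<Rightarrow> bool" where
  "admissible x0 x y \<longleftrightarrow>
     (\<forall>t\<ge>0. y t > 0) \<and>
     set_borel_measurable lebesgue {0..} y \<and>
     (\<forall>T\<ge>0. \<exists>B. \<forall>t\<in>{0..T}. \<bar>y t\<bar> \<le> B) \<and>
     (\<forall>t\<ge>0. set_integrable lborel {0..t} (\<lambda>s. x s * (1 - x s) - y s * x s) \<and>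
              x t = x0 + (LINT s:{0..t}|lborel. x s * (1 - x s) - y s * x s))"

end

theory Submission
  imports Defs "HOL-Real_Asymp.Real_Asymp"
begin


lemma ext_le:
  fixes A :: "real set" and f h :: "real \<Rightarrow> real"
  assumes le: "\<And>t. indicator A t * f t \<le> h t" and int: "integrable lborel h"
  shows "ext_set_integral A f \<le> ereal (integral\<^sup>L lborel h)"
proof -
  have P: "(\<integral>\<^sup>+ t. ennreal (indicator A t * f t) \<partial>lborel) \<le> (\<integral>\<^sup>+ t. ennreal (h t) \<partial>lborel)"
    by (intro nn_integral_mono) (simp add: ennreal_leI le)
  have N: "(\<integral>\<^sup>+ t. ennreal (- h t) \<partial>lborel) \<le> (\<integral>\<^sup>+ t. ennreal (- (indicator A t * f t)) \<partial>lborel)"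
    by (intro nn_integral_mono) (simp add: ennreal_leI le)
  have f1: "(\<integral>\<^sup>+ t. ennreal (h t) \<partial>lborel) \<noteq> \<infinity>" and f2: "(\<integral>\<^sup>+ t. ennreal (- h t) \<partial>lborel) \<noteq> \<infinity>"
    using int unfolding real_integrable_def by auto
  have "ext_set_integral A f \<le> enn2ereal (\<integral>\<^sup>+ t. ennreal (h t) \<partial>lborel) - enn2ereal (\<integral>\<^sup>+ t. ennreal (- h t) \<partial>lborel)"
    unfolding ext_set_integral_def
    by (intro ereal_minus_mono) (use P N in \<open>simp_all add: less_eq_ennreal.rep_eq\<close>)
  also have "\<dots> = ereal (integral\<^sup>L lborel h)"
  proof -
    have e: "enn2ereal X = ereal (enn2real X)" if "X \<noteq> \<infinity>" for X :: ennreal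
    proof -
      have "X = ennreal (enn2real X)" using that by (simp add: ennreal_enn2real less_top)
      hence "enn2ereal X = enn2ereal (ennreal (enn2real X))" by simp
      also have "\<dots> = ereal (enn2real X)" by (rule enn2ereal_ennreal) simp
      finally show ?thesis .
    qed
    show ?thesis unfolding e[OF f1] e[OF f2] real_lebesgue_integral_def[OF int] by simp
  qed
  finally show ?thesis .
qed


lemma tele_mono:
  fixes f g :: "real \<Rightarrow> real" and a b c :: real
  assumes "a \<le> b" "c \<ge> 0"
    and H: "\<And>s u. a \<le> s \<Longrightarrow> s \<le> u \<Longrightarrow> u \<le> b \<Longrightarrow> f u - f s \<ge> - (c * (u - s) * (g u - g s))"
  shows "f b \<ge> f a"
proof (rule ccontr)
  assume "\<not> f b \<ge> f a"
  hence d: "f a - f b > 0" by simp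
  define K where "K = c * (b - a) * (g b - g a)"
  obtain n :: nat where n: "n > K / (f a - f b)" "n \<ge> 1"
  proof -
    obtain m :: nat where "m > K / (f a - f b)" using reals_Archimedean2 by blast
    thus ?thesis using that[of "m + 1"] by simp
  qed
  define h where "h = (b - a) / n"
  define p where "p k = a + real k * h" for k :: nat
  have hn: "h \<ge> 0" using assms n by (simp add: h_def)
  have pn: "p n = b" using n by (simp add: p_def h_def)
  have p0: "p 0 = a" by (simp add: p_def)
  have pk: "a \<le> p k" for k using hn by (simp add: p_def)
  have pkb: "p k \<le> b" if "k \<le> n" for k
  proof -
    have "real k * h \<le> real n * h" using that hn by (intro mult_right_mono) auto
    thus ?thesis using n by (simp add: p_def h_def)
  qed
  have ps: "p (Suc k) - p k = h" for k by (simp add: p_def algebra_simps)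
  have "(\<Sum>k<n. f (p (Suc k)) - f (p k)) \<ge> (\<Sum>k<n. - (c * h * (g (p (Suc k)) - g (p k))))"
  proof (intro sum_mono)
    fix k assume "k \<in> {..<n}"
    hence "p k \<le> p (Suc k)" "p (Suc k) \<le> b" using pkb[of "Suc k"] hn ps[of k] by auto
    thus "f (p (Suc k)) - f (p k) \<ge> - (c * h * (g (p (Suc k)) - g (p k)))"
      using H[of "p k" "p (Suc k)"] pk ps[of k] by simp
  qed
  also have "(\<Sum>k<n. - (c * h * (g (p (Suc k)) - g (p k)))) = - (c * h * (\<Sum>k<n. g (p (Suc k)) - g (p k)))"
    by (simp add: sum_negf sum_distrib_left)
  finally have "f b - f a \<ge> - (c * h * (g b - g a))"
    using sum_lessThan_telescope[of "\<lambda>k. f (p k)" n] sum_lessThan_telescope[of "\<lambda>k. g (p k)" n] pn p0 by simp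
  also have "c * h * (g b - g a) = K / n" by (simp add: K_def h_def)
  finally have 1: "f a - f b \<le> K / n" by simp
  have "K / n < f a - f b" using n d by (simp add: divide_less_eq mult.commute pos_divide_less_eq)
  thus False using 1 by simp
qed


definition Fr :: "(real \<Rightarrow> real) \<Rightarrow> (real \<Rightarrow> real) \<Rightarrow> real \<Rightarrow> real" where
  "Fr x y s = x s * (1 - x s) - y s * x s"

context
  fixes x0 :: real and x y :: "real \<Rightarrow> real"
  assumes adm: "admissible x0 x y" and x0: "x0 > 0"
begin

lemma ypos: "t \<ge> 0 \<Longrightarrow> y t > 0" using adm by (simp add: admissible_def)

lemma ybnd: "T \<ge> 0 \<Longrightarrow> \<exists>B. \<forall>t\<in>{0..T}. \<bar>y t\<bar> \<le> B" using adm by (simp add: admissible_def)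

lemma Fint: "t \<ge> 0 \<Longrightarrow> set_integrable lborel {0..t} (Fr x y)"
  using adm by (simp add: admissible_def Fr_def[abs_def])

lemma xeq_L: "t \<ge> 0 \<Longrightarrow> x t = x0 + (LINT s:{0..t}|lborel. Fr x y s)"
  using adm by (simp add: admissible_def Fr_def[abs_def])

lemma Fhk: "t \<ge> 0 \<Longrightarrow> Fr x y integrable_on {0..t}"
  using Fint set_borel_integral_eq_integral(1) by blast

lemma xeq: "t \<ge> 0 \<Longrightarrow> x t = x0 + integral {0..t} (Fr x y)"
  using xeq_L Fint set_borel_integral_eq_integral(2) by metis

lemma x_0: "x 0 = x0" using xeq[of 0] by simp

lemma Fhk2: "0 \<le> a \<Longrightarrow> a \<le> b \<Longrightarrow> Fr x y integrable_on {a..b}"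
  using Fhk[of b] integrable_on_subinterval[of "Fr x y" "{0..b}" a b] by auto

lemma xdiff: "0 \<le> a \<Longrightarrow> a \<le> b \<Longrightarrow> x b - x a = integral {a..b} (Fr x y)"
  using xeq[of a] xeq[of b] Henstock_Kurzweil_Integration.integral_combine[where a=0 and c=a and b=b and f="Fr x y"] Fhk[of b] by simp

lemma xcont: "0 \<le> b \<Longrightarrow> continuous_on {0..b} x"
proof -
  assume hb: "0 \<le> b"
  have "continuous_on {0..b} (\<lambda>t. x0 + integral {0..t} (Fr x y))"
    using indefinite_integral_continuous_1[OF Fhk[OF hb]] by (intro continuous_intros)
  thus ?thesis by (rule continuous_on_cong[THEN iffD1, rotated 2]) (auto simp: xeq)
qed

lemma xub: "t \<ge> 0 \<Longrightarrow> x t \<le> max x0 1"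
proof (rule ccontr)
  define M where "M = max x0 1"
  assume t: "t \<ge> 0" and "\<not> x t \<le> max x0 1"
  hence xt: "x t > M" unfolding M_def by linarith
  define S where "S = {0..t} \<inter> x -` {..M}"
  have cl: "closed S" unfolding S_def by (intro continuous_closed_preimage xcont t) auto
  have 0: "0 \<in> S" using t x_0 by (simp add: S_def M_def)
  have bdd: "bdd_above S" by (auto simp: S_def bdd_above_def)
  define t2 where "t2 = Sup S"
  have t2S: "t2 \<in> S" using closed_contains_Sup[OF _ bdd cl] 0 by (auto simp: t2_def)
  hence t2: "0 \<le> t2" "t2 \<le> t" "x t2 \<le> M" by (auto simp: S_def)
  have above: "x r > M" if "t2 < r" "r \<le> t" for r
  proof (rule ccontr)
    assume "\<not> x r > M" hence "r \<in> S" using that t2 by (auto simp: S_def)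
    hence "r \<le> t2" using bdd by (simp add: t2_def cSup_upper)
    thus False using that by simp
  qed
  obtain c where c: "t2 \<le> c" "c \<le> t" "x c = M"
    using IVT'[of x t2 M t] t2 xt xcont[OF t] continuous_on_subset[of "{0..t}" x "{t2..t}"] by force
  have "c \<le> t2" using above[of c] c by force
  hence xt2: "x t2 = M" using c by simp
  have ge1: "x r \<ge> 1" if "r \<in> {t2..t}" for r
  proof (cases "r = t2")
    case True thus ?thesis using xt2 by (simp add: M_def)
  next
    case False thus ?thesis using above[of r] that by (force simp: M_def)
  qed
  have "integral {t2..t} (Fr x y) \<le> integral {t2..t} (\<lambda>_. 0::real)"
  proof (rule integral_le)
    show "Fr x y integrable_on {t2..t}" using Fhk2 t2 by simp
    show "(\<lambda>_. 0::real) integrable_on {t2..t}" by (rule integrable_0)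
    fix r assume r: "r \<in> {t2..t}"
    have "y r > 0" using ypos r t2 by simp
    hence "1 - x r - y r \<le> 0" using ge1[OF r] by simp
    hence "x r * (1 - x r - y r) \<le> 0" using ge1[OF r] by (simp add: mult_nonneg_nonpos)
    thus "Fr x y r \<le> 0" by (simp add: Fr_def algebra_simps)
  qed
  hence "x t - x t2 \<le> 0" using xdiff[of t2 t] t2 by simp
  thus False using xt xt2 by simp
qed

lemma xpos: "t \<ge> 0 \<Longrightarrow> x t > 0"
proof (rule ccontr)
  assume t: "t \<ge> 0" and "\<not> x t > 0"
  hence xt: "x t \<le> 0" by simp
  define S where "S = {0..t} \<inter> x -` {..0}"
  have cl: "closed S" unfolding S_def by (intro continuous_closed_preimage xcont t) auto
  have tS: "t \<in> S" using t xt by (simp add: S_def)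
  have bdd: "bdd_below S" by (auto simp: S_def bdd_below_def)
  define t1 where "t1 = Inf S"
  have t1S: "t1 \<in> S" using closed_contains_Inf[OF _ bdd cl] tS by (auto simp: t1_def)
  hence t1: "0 \<le> t1" "t1 \<le> t" "x t1 \<le> 0" by (auto simp: S_def)
  have below: "x r > 0" if "0 \<le> r" "r < t1" for r
  proof (rule ccontr)
    assume "\<not> x r > 0" hence "r \<in> S" using that t1 by (auto simp: S_def)
    hence "t1 \<le> r" using bdd by (simp add: t1_def cInf_lower)
    thus False using that by simp
  qed
  have cont1: "continuous_on {0..t1} x" using xcont[of t1] t1 by simp
  obtain c where c: "0 \<le> c" "c \<le> t1" "x c = 0"
    using IVT2'[of x t1 0 0] t1 x_0 x0 cont1 by force
  have "\<not> c < t1" using below[of c] c by force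
  hence xt1: "x t1 = 0" using c by (metis order_le_less)
  have t1pos: "t1 > 0" using xt1 x_0 x0 t1 by (cases "t1 = 0") auto
  obtain r1 where r1: "r1 \<in> {0..t1}" "\<And>r. r \<in> {0..t1} \<Longrightarrow> x r \<le> x r1"
    using continuous_attains_sup[of "{0..t1}" x] cont1 t1 by auto
  define M1 where "M1 = x r1"
  obtain B where B: "\<And>r. r \<in> {0..t1} \<Longrightarrow> \<bar>y r\<bar> \<le> B" using ybnd[of t1] t1 by (meson atLeastAtMost_iff)
  define K where "K = \<bar>M1\<bar> + \<bar>B\<bar> + 1"
  have Kpos: "K > 0" by (simp add: K_def add_nonneg_pos)
  define s0 where "s0 = max 0 (t1 - 1 / (2 * K))"
  have s0: "0 \<le> s0" "s0 < t1" "t1 - s0 \<le> 1 / (2 * K)" using t1pos Kpos by (auto simp: s0_def)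
  obtain rs where rs: "rs \<in> {s0..t1}" "\<And>r. r \<in> {s0..t1} \<Longrightarrow> x r \<le> x rs"
    using continuous_attains_sup[of "{s0..t1}" x] continuous_on_subset[OF cont1, of "{s0..t1}"] s0 by auto
  define m where "m = x rs"
  have mpos: "m > 0" using rs(2)[of s0] below[of s0] s0 by (simp add: m_def)
  have xnn: "x r \<ge> 0" if "r \<in> {0..t1}" for r
    using that below[of r] xt1 by (cases "r = t1") auto
  have "m = x rs - x t1" using xt1 by (simp add: m_def)
  also have "\<dots> = integral {rs..t1} (\<lambda>r. - Fr x y r)" using xdiff[of rs t1] rs s0 by simp
  also have "\<dots> \<le> integral {rs..t1} (\<lambda>_. K * m)"
  proof (rule integral_le)
    show "(\<lambda>r. - Fr x y r) integrable_on {rs..t1}" using Fhk2[of rs t1] rs s0 by (intro integrable_neg) auto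
    show "(\<lambda>_. K * m) integrable_on {rs..t1}" by (rule integrable_const_ivl)
    fix r assume r: "r \<in> {rs..t1}"
    hence r0: "r \<in> {0..t1}" and rs0: "r \<in> {s0..t1}" using rs s0 by auto
    have a1: "0 \<le> x r" "x r \<le> m" using xnn[OF r0] rs(2)[OF rs0] by (auto simp: m_def)
    have "x r + y r - 1 \<le> K" using r1(2)[OF r0] B[OF r0] by (simp add: K_def M1_def)
    hence "x r * (x r + y r - 1) \<le> x r * K" using a1 by (simp add: mult_left_mono)
    also have "\<dots> \<le> m * K" using a1 Kpos by (simp add: mult_right_mono)
    finally show "- Fr x y r \<le> K * m" by (simp add: Fr_def algebra_simps)
  qed
  also have "\<dots> = (t1 - rs) * (K * m)" using rs by simp
  also have "\<dots> \<le> (1 / (2 * K)) * (K * m)"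
    using rs s0 Kpos mpos by (intro mult_right_mono) auto
  also have "\<dots> = m / 2" using Kpos by simp
  finally show False using mpos by simp
qed

lemma eFint:
  assumes d: "\<delta> \<ge> 0" and t: "t \<ge> 0"
  shows "set_integrable lborel {0..t} (\<lambda>r. exp (- \<delta> * r) * Fr x y r)"
proof -
  have I: "integrable lborel (\<lambda>r. indicator {0..t} r *\<^sub>R Fr x y r)"
    using Fint[OF t] by (simp add: set_integrable_def)
  have m: "(\<lambda>r. indicator {0..t} r *\<^sub>R Fr x y r) \<in> borel_measurable lborel"
    using I by (rule borel_measurable_integrable)
  have m2: "(\<lambda>r. exp (- \<delta> * r) * (indicator {0..t} r *\<^sub>R Fr x y r)) \<in> borel_measurable lborel"
    using m by measurable
  have eq: "(\<lambda>r. indicator {0..t} r *\<^sub>R (exp (- \<delta> * r) * Fr x y r)) = (\<lambda>r. exp (- \<delta> * r) * (indicator {0..t} r *\<^sub>R Fr x y r))"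
    by (auto simp: indicator_def)
  show ?thesis unfolding set_integrable_def eq
  proof (rule Bochner_Integration.integrable_bound[OF I m2], rule AE_I2)
    fix r
    show "norm (exp (- \<delta> * r) * (indicator {0..t} r *\<^sub>R Fr x y r)) \<le> norm (indicator {0..t} r *\<^sub>R Fr x y r)"
    proof (cases "r \<in> {0..t}")
      case True
      hence "exp (- \<delta> * r) \<le> 1" using d by simp
      thus ?thesis using True by (simp add: abs_mult mult_left_le_one_le)
    qed simp
  qed
qed

lemma eFhk: "\<delta> \<ge> 0 \<Longrightarrow> 0 \<le> a \<Longrightarrow> a \<le> b \<Longrightarrow> (\<lambda>r. exp (- \<delta> * r) * Fr x y r) integrable_on {a..b}"
  using eFint[of \<delta> b] set_borel_integral_eq_integral(1) integrable_on_subinterval[of _ "{0..b}" a b] by force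

lemma absFhk: "0 \<le> a \<Longrightarrow> a \<le> b \<Longrightarrow> (\<lambda>r. \<bar>Fr x y r\<bar>) integrable_on {a..b}"
  using set_integrable_abs[OF Fint[of b]] set_borel_integral_eq_integral(1) integrable_on_subinterval[of _ "{0..b}" a b] by force

lemma exp_diff_le:
  fixes \<delta> s u :: real
  assumes "\<delta> \<ge> 0" "0 \<le> s" "s \<le> u"
  shows "exp (- \<delta> * s) - exp (- \<delta> * u) \<le> \<delta> * (u - s)"
proof -
  have "exp (- \<delta> * u) = exp (- \<delta> * s) * exp (- (\<delta> * (u - s)))" by (subst exp_add[symmetric]) (simp add: algebra_simps)
  also have "\<dots> \<ge> exp (- \<delta> * s) * (1 - \<delta> * (u - s))"
    using exp_ge_add_one_self[of "- (\<delta> * (u - s))"] by (intro mult_left_mono) auto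
  finally have "exp (- \<delta> * s) - exp (- \<delta> * u) \<le> exp (- \<delta> * s) * (\<delta> * (u - s))" by (simp add: algebra_simps)
  also have "\<dots> \<le> 1 * (\<delta> * (u - s))" using assms by (intro mult_right_mono) auto
  finally show ?thesis by simp
qed

lemma weighted:
  fixes \<delta> T T' :: real
  assumes d: "\<delta> \<ge> 0" and T: "0 \<le> T" "T \<le> T'"
  shows "integral {T..T'} (\<lambda>r. exp (- \<delta> * r) * Fr x y r) \<ge> - (exp (- \<delta> * T) * x T)"
proof -
  define e where "e r = exp (- \<delta> * r)" for r
  define F where "F = Fr x y"
  define E where "E t = integral {T..t} (\<lambda>r. e r * F r)" for t
  define A where "A t = integral {T..t} (\<lambda>r. \<bar>F r\<bar>)" for t
  define D where "D t = E t - e t * x t" for t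
  have Edif: "E u - E s = integral {s..u} (\<lambda>r. e r * F r)" if "T \<le> s" "s \<le> u" for s u
    using Henstock_Kurzweil_Integration.integral_combine[where a=T and c=s and b=u and f="\<lambda>r. e r * F r"]
      eFhk[OF d, of T u] that T unfolding E_def e_def F_def by simp
  have Adif: "A u - A s = integral {s..u} (\<lambda>r. \<bar>F r\<bar>)" if "T \<le> s" "s \<le> u" for s u
    using Henstock_Kurzweil_Integration.integral_combine[where a=T and c=s and b=u and f="\<lambda>r. \<bar>F r\<bar>"]
      absFhk[of T u] that T unfolding A_def F_def by simp
  have step: "D u - D s \<ge> - (\<delta> * (u - s) * (A u - A s))" if su: "T \<le> s" "s \<le> u" "u \<le> T'" for s u
  proof -
    have s0: "0 \<le> s" using su T by simp
    have i1: "(\<lambda>r. e r * F r) integrable_on {s..u}" using eFhk[OF d s0 su(2)] by (simp add: e_def F_def)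
    have i2: "F integrable_on {s..u}" using Fhk2[OF s0 su(2)] by (simp add: F_def)
    have i3: "(\<lambda>r. \<bar>F r\<bar>) integrable_on {s..u}" using absFhk[OF s0 su(2)] by (simp add: F_def)
    have xd: "x u - x s = integral {s..u} F" using xdiff[OF s0 su(2)] by (simp add: F_def)
    have "\<delta> * s \<le> \<delta> * u" using d su by (auto intro: mult_left_mono)
    hence es: "e u \<le> e s" by (simp add: e_def)
    have xs: "x s \<ge> 0" using xpos[OF s0] by simp
    have Anneg: "A u - A s \<ge> 0" using Adif[OF su(1,2)] by (simp add: integral_nonneg i3)
    have "integral {s..u} (\<lambda>r. e r * F r) - e u * integral {s..u} F
        = integral {s..u} (\<lambda>r. (e r - e u) * F r)"
    proof -
      have i4: "(\<lambda>r. e u * F r) integrable_on {s..u}" using integrable_on_cmult_left[OF i2, of "e u"] by simp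
      have "integral {s..u} (\<lambda>r. (e r - e u) * F r) = integral {s..u} (\<lambda>r. e r * F r - e u * F r)"
        by (simp add: left_diff_distrib)
      also have "\<dots> = integral {s..u} (\<lambda>r. e r * F r) - integral {s..u} (\<lambda>r. e u * F r)"
        by (rule integral_diff[OF i1 i4])
      also have "integral {s..u} (\<lambda>r. e u * F r) = e u * integral {s..u} F" by simp
      finally show ?thesis by simp
    qed
    also have "\<dots> \<ge> integral {s..u} (\<lambda>r. - ((e s - e u) * \<bar>F r\<bar>))"
    proof (rule integral_le)
      show "(\<lambda>r. - ((e s - e u) * \<bar>F r\<bar>)) integrable_on {s..u}"
        using integrable_neg[OF integrable_on_cmult_left[OF i3, of "e s - e u"]] by simp
      show "(\<lambda>r. (e r - e u) * F r) integrable_on {s..u}"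
        using integrable_diff[OF i1 integrable_on_cmult_left[OF i2, of "e u"]] by (simp add: left_diff_distrib)
      fix r assume r: "r \<in> {s..u}"
      have "\<delta> * s \<le> \<delta> * r" "\<delta> * r \<le> \<delta> * u" using d r by (auto intro: mult_left_mono)
      hence "e u \<le> e r" "e r \<le> e s" by (simp_all add: e_def)
      hence "0 \<le> e r - e u" "e r - e u \<le> e s - e u" by simp_all
      have "(e r - e u) * (- \<bar>F r\<bar>) \<le> (e r - e u) * F r"
        using \<open>0 \<le> e r - e u\<close> by (intro mult_left_mono) auto
      hence "(e r - e u) * F r \<ge> - ((e r - e u) * \<bar>F r\<bar>)" by simp
      moreover have "(e r - e u) * \<bar>F r\<bar> \<le> (e s - e u) * \<bar>F r\<bar>"
        using \<open>e r - e u \<le> e s - e u\<close> by (intro mult_right_mono) auto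
      ultimately show "- ((e s - e u) * \<bar>F r\<bar>) \<le> (e r - e u) * F r" by linarith
    qed
    also have "integral {s..u} (\<lambda>r. - ((e s - e u) * \<bar>F r\<bar>)) = - ((e s - e u) * (A u - A s))"
      using Adif[OF su(1,2)] by simp
    finally have 1: "integral {s..u} (\<lambda>r. e r * F r) - e u * integral {s..u} F \<ge> - ((e s - e u) * (A u - A s))" .
    have 2: "(e s - e u) * (A u - A s) \<le> (\<delta> * (u - s)) * (A u - A s)"
      using exp_diff_le[OF d s0 su(2)] Anneg by (intro mult_right_mono) (auto simp: e_def)
    have "D u - D s = (integral {s..u} (\<lambda>r. e r * F r) - e u * (x u - x s)) - (e u - e s) * x s"
      using Edif[OF su(1,2)] by (simp add: D_def algebra_simps)
    moreover have "(e u - e s) * x s \<le> 0" using es xs by (simp add: mult_nonpos_nonneg)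
    ultimately show ?thesis using 1 2 xd by simp
  qed
  have "D T' \<ge> D T"
    by (rule tele_mono[where f=D and g=A and a=T and b=T' and c=\<delta>]) (use T d step in auto)
  moreover have "E T = 0" by (simp add: E_def)
  moreover have "e T' * x T' \<ge> 0" using xpos[of T'] T by (simp add: e_def)
  ultimately have "E T' \<ge> - (e T * x T)" by (simp add: D_def)
  thus ?thesis by (simp add: E_def e_def F_def)
qed

end

theorem lemma7p1:
  fixes \<delta> x0 :: real
  assumes "\<delta> > 0" and "x0 > 0"
  shows "\<exists>\<omega> :: real \<Rightarrow> real.
           (\<forall>t\<ge>0. \<omega> t > 0) \<and>
           (\<forall>s t. 0 \<le> s \<longrightarrow> s \<le> t \<longrightarrow> \<omega> t \<le> \<omega> s) \<and>
           (\<omega> \<longlongrightarrow> 0) at_top \<and>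
           (\<forall>x y. admissible x0 x y \<longrightarrow>
              (\<forall>T T'. 0 \<le> T \<longrightarrow> T < T' \<longrightarrow>
                 ext_set_integral {T..T'} (\<lambda>t. exp (- \<delta> * t) * (ln (x t) + ln (y t)))
                   < ereal (\<omega> T)))"
proof -
  define C where "C = max x0 1 + 1"
  have C: "C > 0" by (simp add: C_def)
  define \<omega> where "\<omega> t = C * exp (- \<delta> * t)" for t :: real
  have "(\<forall>t\<ge>0. \<omega> t > 0)" using C by (simp add: \<omega>_def)
  moreover have "\<forall>s t. 0 \<le> s \<longrightarrow> s \<le> t \<longrightarrow> \<omega> t \<le> \<omega> s"
  proof (intro allI impI)
    fix s t :: real assume "0 \<le> s" "s \<le> t"
    hence "\<delta> * s \<le> \<delta> * t" using assms by (auto intro: mult_left_mono)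
    thus "\<omega> t \<le> \<omega> s" using C by (simp add: \<omega>_def)
  qed
  moreover have "(\<omega> \<longlongrightarrow> 0) at_top" unfolding \<omega>_def using assms by real_asymp
  moreover have "\<forall>x y. admissible x0 x y \<longrightarrow>
              (\<forall>T T'. 0 \<le> T \<longrightarrow> T < T' \<longrightarrow>
                 ext_set_integral {T..T'} (\<lambda>t. exp (- \<delta> * t) * (ln (x t) + ln (y t)))
                   < ereal (\<omega> T))"
  proof (intro allI impI)
    fix x y :: "real \<Rightarrow> real" and T T' :: real assume adm: "admissible x0 x y" and T: "0 \<le> T" "T < T'"
    define h where "h t = indicator {T..T'} t *\<^sub>R (- (exp (- \<delta> * t) * Fr x y t))" for t :: real
    have si: "set_integrable lborel {T..T'} (\<lambda>t. exp (- \<delta> * t) * Fr x y t)"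
      using set_integrable_subset[OF eFint[OF adm \<open>x0 > 0\<close>, of \<delta> T'], of "{T..T'}"] assms T by auto
    have hfun: "h = (\<lambda>t. - (indicator {T..T'} t *\<^sub>R (exp (- \<delta> * t) * Fr x y t)))"
      by (simp add: h_def fun_eq_iff)
    have ih: "integrable lborel h"
      unfolding hfun using integrable_minus[OF si[unfolded set_integrable_def]] .
    have "integral\<^sup>L lborel h = - (LINT t:{T..T'}|lborel. exp (- \<delta> * t) * Fr x y t)"
      unfolding hfun set_lebesgue_integral_def by (rule integral_minus)
    also have "\<dots> = - integral {T..T'} (\<lambda>t. exp (- \<delta> * t) * Fr x y t)"
      using set_borel_integral_eq_integral(2)[OF si] by simp
    also have "\<dots> \<le> exp (- \<delta> * T) * x T"
      using weighted[OF adm \<open>x0 > 0\<close>, of \<delta> T T'] assms T by simp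
    also have "\<dots> \<le> exp (- \<delta> * T) * max x0 1"
      using xub[OF adm \<open>x0 > 0\<close>, of T] T by (intro mult_left_mono) auto
    also have "\<dots> < \<omega> T" by (simp add: \<omega>_def C_def algebra_simps)
    finally have hlt: "integral\<^sup>L lborel h < \<omega> T" .
    have le: "indicator {T..T'} t * (exp (- \<delta> * t) * (ln (x t) + ln (y t))) \<le> h t" for t
    proof (cases "t \<in> {T..T'}")
      case True
      hence t0: "t \<ge> 0" using T by simp
      have xp: "x t > 0" using xpos[OF adm \<open>x0 > 0\<close> t0] .
      have yp: "y t > 0" using ypos[OF adm \<open>x0 > 0\<close> t0] .
      have "ln (x t) + ln (y t) = ln (x t * y t)" using xp yp by (simp add: ln_mult)
      also have "\<dots> \<le> x t * y t - 1" using xp yp by (intro ln_le_minus_one) simp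
      also have "\<dots> \<le> - Fr x y t"
      proof -
        have "0 \<le> (x t - 1/2)^2" by simp
        hence "x t * (1 - x t) \<le> 1" by (simp add: power2_eq_square algebra_simps)
        thus ?thesis by (simp add: Fr_def algebra_simps)
      qed
      finally have "exp (- \<delta> * t) * (ln (x t) + ln (y t)) \<le> exp (- \<delta> * t) * (- Fr x y t)"
        by (intro mult_left_mono) auto
      thus ?thesis using True by (simp add: h_def)
    qed (simp add: h_def)
    have "ext_set_integral {T..T'} (\<lambda>t. exp (- \<delta> * t) * (ln (x t) + ln (y t))) \<le> ereal (integral\<^sup>L lborel h)"
      by (rule ext_le[OF le ih])
    also have "\<dots> < ereal (\<omega> T)" using hlt by simp
    finally show "ext_set_integral {T..T'} (\<lambda>t. exp (- \<delta> * t) * (ln (x t) + ln (y t))) < ereal (\<omega> T)" .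
  qed
  ultimately show ?thesis by blast
qed

end
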